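(* For any skew-symmetric matrix $M$ (with labels $A$), $\sum_{\mathsf{I}\subseteq A}\operatorname{Pf}(M_{\mathsf{I}})\langle\mathsf{I}|$ and $\sum_{\mathsf{I}\subseteq A}\operatorname{Pf}(M_{\bar{\mathsf{I}}})|\mathsf{I}\rangle$ are morphisms of $\mathscr{P}$. Consequently $\mathscr{P}$ is a dagger monoidal category (with the usual vector space dagger).
   Context: For $i\in\mathbb{N}$, let $V_i\cong\mathbb{C}^2$ have orthonormal basis $v_{i,0},v_{i,1}$, and for $\mathsf{N}\subset\mathbb{N}$ let $V_{\mathsf{N}}=\bigotimes_{i\in\mathsf{N}}V_i$. For a skew-symmetric matrix $M$ whose rows and columns carry the same labels $\mathsf{N}$ in the same order, define $\operatorname{sPf}(M)=\sum_{\mathsf{I}\subseteq\mathsf{N}}\operatorname{Pf}(M_{\mathsf{I}})|\mathsf{I}\rangle$ and $\operatorname{sPf}^{\vee}(M)=\sum_{\mathsf{I}\subseteq\mathsf{N}}\operatorname{Pf}(M_{\bar{\mathsf{I}}})\langle\mathsf{I}|$, where $M_{\mathsf{I}}$ is the principal submatrix with labels $\mathsf{I}$, $M_{\bar{\mathsf{I}}}$ is the principal submatrix with the rows and columns labeled $\mathsf{I}$ removed, $|\mathsf{I}\rangle=\bigotimes_{i\in\mathsf{N}}v_{i,\chi(i,\mathsf{I})}$, $\langle\mathsf{I}|=\bigotimes_{i\in\mathsf{N}}v^*_{i,\chi(i,\mathsf{I})}$, with $\chi(i,\mathsf{I})=1$ if $i\in\mathsf{I}$ and $0$ otherwise. $\mathscr{P}$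 is the free monoidal subcategory of finite-dimensional complex vector spaces whose objects are $V_{\mathsf{N}}$ for ordered subsets $\mathsf{N}\subset\mathbb{N}$ (usual tensor product) and whose morphisms are generated, under the usual composition/contraction and tensor product, by all morphisms $\operatorname{sPf}(M)$ and $\operatorname{sPf}^{\vee}(M)$. *)

theory Defs
  imports Complex_Main "HOL-Combinatorics.Permutations"
begin

text \<open>A skew-symmetric matrix with label set given by the list N is modelled as a
function M :: nat => nat => complex, whose relevant entries are those with both
labels in N.\<close>

definition skew_on :: "(nat \<Rightarrow> nat \<Rightarrow> complex) \<Rightarrow> nat list \<Rightarrow> bool" where
  "skew_on M N \<longleftrightarrow> (\<forall>i\<in>set N. \<forall>j\<in>set N. M i j = - M j i)"

text \<open>Pfaffian of the principal submatrix of M whose rows/columns are the labels L,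
taken in the order of the list L.  Pf of the empty matrix is 1, of odd size 0.\<close>

definition Pf :: "(nat \<Rightarrow> nat \<Rightarrow> complex) \<Rightarrow> nat list \<Rightarrow> complex" where
  "Pf M L = (let n = length L; m = n div 2 in
     if odd n then 0 else
       (\<Sum>p | p permutes {..<n}. of_int (sign p) *
           (\<Prod>i<m. M (L ! p (2*i)) (L ! p (2*i+1))))
       / (2 ^ m * fact m))"

text \<open>A basis vector of V_N is encoded by a bool list bs of length |N|
(bs!k = chi(N!k, I)).  sel N bs lists the labels of I in the order of N,
cosel N bs the labels of the complement.\<close>

definition sel :: "nat list \<Rightarrow> bool list \<Rightarrow> nat list" where
  "sel N bs = map fst (filter snd (zip N bs))"

definition cosel :: "nat list \<Rightarrow> bool list \<Rightarrow> nat list" where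
  "cosel N bs = map fst (filter (\<lambda>x. \<not> snd x) (zip N bs))"

text \<open>A morphism V_A \<rightarrow> V_B is a triple (A, B, F) where F out in is the matrix
entry <out| f |in>; entries outside the valid index lengths are normalised to 0.\<close>

type_synonym morph = "nat list \<times> nat list \<times> (bool list \<Rightarrow> bool list \<Rightarrow> complex)"

definition mk :: "nat list \<Rightarrow> nat list \<Rightarrow> (bool list \<Rightarrow> bool list \<Rightarrow> complex) \<Rightarrow> morph" where
  "mk A B F = (A, B, \<lambda>ou i. if length ou = length B \<and> length i = length A then F ou i else 0)"

definition states :: "nat list \<Rightarrow> bool list set" where
  "states N = {bs. length bs = length N}"

inductive_set catP :: "morph set" where
  ident: "distinct N \<Longrightarrow> mk N N (\<lambda>ou i. if ou = i then 1 else 0) \<in> catP"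
| sPf: "distinct N \<Longrightarrow> skew_on M N \<Longrightarrow> mk [] N (\<lambda>ou i. Pf M (sel N ou)) \<in> catP"
| sPf_dual: "distinct N \<Longrightarrow> skew_on M N \<Longrightarrow> mk N [] (\<lambda>ou i. Pf M (cosel N i)) \<in> catP"
| comp: "(A, B, F) \<in> catP \<Longrightarrow> (B, C, G) \<in> catP \<Longrightarrow>
          mk A C (\<lambda>ou i. \<Sum>b\<in>states B. G ou b * F b i) \<in> catP"
| tensor: "(A, B, F) \<in> catP \<Longrightarrow> (A', B', G) \<in> catP \<Longrightarrow>
          distinct (A @ A') \<Longrightarrow> distinct (B @ B') \<Longrightarrow>
          mk (A @ A') (B @ B')
             (\<lambda>ou i. F (take (length B) ou) (take (length A) i) *
                    G (drop (length B) ou) (drop (length A) i)) \<in> catP"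

definition dagger :: "morph \<Rightarrow> morph" where
  "dagger f = (case f of (A, B, F) \<Rightarrow> (B, A, \<lambda>ou i. cnj (F i ou)))"

end

theory Submission
  imports Defs
begin

lemma mk_cong:
  assumes "\<And>ou i. length ou = length B \<Longrightarrow> length i = length A \<Longrightarrow> F ou i = G ou i"
  shows "mk A B F = mk A B G"
  unfolding mk_def using assms by (auto intro!: ext)

lemma dagger_mk: "dagger (mk A B F) = mk B A (\<lambda>ou i. cnj (F i ou))"
  unfolding dagger_def mk_def by (auto intro!: ext)

lemma finite_states[simp]: "finite (states N)"
proof -
  have "states N = {xs. set xs \<subseteq> (UNIV::bool set) \<and> length xs = length N}"
    unfolding states_def by auto
  thus ?thesis using finite_lists_length_eq[of "UNIV::bool set"] by simp
qed

lemma states_Nil: "states [] = {[]}"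
  unfolding states_def by auto

lemma sum_states_Cons:
  "(\<Sum>b\<in>states (x#N). f b) = (\<Sum>b\<in>states N. f (True#b)) + (\<Sum>b\<in>states N. f (False#b))"
proof -
  have e: "states (x#N) = Cons True ` states N \<union> Cons False ` states N"
    unfolding states_def by (auto simp: length_Suc_conv)
  show ?thesis unfolding e
    by (subst sum.union_disjoint) (auto simp: sum.reindex inj_on_def)
qed

lemma Pf_Nil[simp]: "Pf M [] = 1"
  unfolding Pf_def by simp

lemma Pf_odd: "odd (length L) \<Longrightarrow> Pf M L = 0"
  unfolding Pf_def by simp

lemma perms2: "{p. p permutes {..<2::nat}} = {id, transpose 0 1}"
proof -
  have sub: "{id, transpose 0 1} \<subseteq> {p. p permutes {..<2::nat}}"
    by (auto intro: permutes_id permutes_swap_id)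
  have c: "card {p. p permutes {..<2::nat}} = 2"
    using card_permutations[of "{..<2::nat}" 2] by simp
  have c2: "card {id, transpose (0::nat) 1} = 2"
  proof -
    have "id \<noteq> transpose (0::nat) 1" by (metis id_apply transpose_apply_first zero_neq_one)
    thus ?thesis by simp
  qed
  show ?thesis
    by (metis c c2 card_subset_eq finite_permutations finite_lessThan sub)
qed

lemma Pf_pair: "Pf M [x,y] = (M x y - M y x) / 2"
proof -
  have e: "{..<Suc (Suc 0)} = {..<2::nat}" by simp
  have ne: "id \<noteq> transpose (0::nat) 1" by (metis id_apply transpose_apply_first zero_neq_one)
  show ?thesis unfolding Pf_def
    using ne by (simp add: e perms2 sign_swap_id diff_divide_distrib transpose_def)
qed

lemma cnj_Pf: "cnj (Pf M L) = Pf (\<lambda>x y. cnj (M x y)) L"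
  unfolding Pf_def Let_def by (simp add: complex_cnj_divide)

lemma catP_cong:
  assumes "mk A B G \<in> catP"
    and "\<And>ou i. length ou = length B \<Longrightarrow> length i = length A \<Longrightarrow> F ou i = G ou i"
  shows "mk A B F \<in> catP"
  using assms mk_cong by metis

lemma comp_mk:
  assumes "mk A B F \<in> catP" "mk B C G \<in> catP"
  shows "mk A C (\<lambda>ou i. \<Sum>b\<in>states B. G ou b * F b i) \<in> catP"
proof -
  have "mk A C (\<lambda>ou i. \<Sum>b\<in>states B.
     (if length ou = length C \<and> length b = length B then G ou b else 0) *
     (if length b = length B \<and> length i = length A then F b i else 0)) \<in> catP"
    using catP.comp[OF assms(1)[unfolded mk_def] assms(2)[unfolded mk_def]] unfolding mk_def .
  thus ?thesis
    by (rule catP_cong) (auto simp: states_def intro!: sum.cong)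
qed

lemma tensor_mk:
  assumes "mk A B F \<in> catP" "mk A' B' G \<in> catP" "distinct (A @ A')" "distinct (B @ B')"
  shows "mk (A @ A') (B @ B') (\<lambda>ou i. F (take (length B) ou) (take (length A) i) *
                    G (drop (length B) ou) (drop (length A) i)) \<in> catP"
proof -
  have "mk (A @ A') (B @ B') (\<lambda>ou i.
     (if length (take (length B) ou) = length B \<and> length (take (length A) i) = length A then F (take (length B) ou) (take (length A) i) else 0) *
     (if length (drop (length B) ou) = length B' \<and> length (drop (length A) i) = length A' then G (drop (length B) ou) (drop (length A) i) else 0)) \<in> catP"
    using catP.tensor[OF assms(1)[unfolded mk_def] assms(2)[unfolded mk_def] assms(3,4)] unfolding mk_def .
  thus ?thesis
    by (rule catP_cong) auto
qed

lemma X1: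
  assumes d: "distinct [i,k,l,j]"
  shows "mk [i] [j] (\<lambda>ou a. if ou = map Not a then 1 else 0) \<in> catP"
proof -
  define P :: "nat \<Rightarrow> nat \<Rightarrow> complex" where
    "P x y = (if x=i\<and>y=l \<or> x=k\<and>y=l then 1 else if x=l\<and>y=i \<or> x=l\<and>y=k then -1 else 0)" for x y
  define N :: "nat \<Rightarrow> nat \<Rightarrow> complex" where
    "N x y = (if x=k\<and>y=j then 1 else if x=j\<and>y=k then -1 else 0)" for x y
  have sP: "skew_on P [i,k,l]" using d unfolding skew_on_def P_def by auto
  have sN: "skew_on N [k,l,j]" using d unfolding skew_on_def N_def by auto
  have t1: "mk [i] [i,k,l,j] (\<lambda>ou a. (if take 1 ou = take 1 a then 1 else 0) *
        Pf N (sel [k, l, j] (drop 1 ou))) \<in> catP"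
    using tensor_mk[OF catP.ident[of "[i]"] catP.sPf[OF _ sN]] d by simp
  have t2: "mk [i,k,l,j] [j] (\<lambda>ou a. Pf P (cosel [i,k,l] (take (Suc (Suc (Suc 0))) a)) *
        (if ou = drop (Suc (Suc (Suc 0))) a then 1 else 0)) \<in> catP"
    using tensor_mk[OF catP.sPf_dual[OF _ sP] catP.ident[of "[j]"]] d by simp
  show ?thesis
  proof (rule catP_cong[OF comp_mk[OF t1 t2]])
    fix ou a :: "bool list" assume "length ou = length [j]" "length a = length [i]"
    then obtain x y where xy: "ou = [x]" "a = [y]" by (auto simp: length_Suc_conv)
    show "(if ou = map Not a then 1 else 0) = (\<Sum>b\<in>states [i, k, l, j].
          Pf P (cosel [i, k, l] (take (Suc (Suc (Suc 0))) b)) * (if ou = drop (Suc (Suc (Suc 0))) b then 1 else 0) *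
          ((if take 1 b = take 1 a then 1 else 0) * Pf N (sel [k, l, j] (drop 1 b))))"
      using d unfolding xy
      by (cases x; cases y; simp add: sum_states_Cons states_Nil sel_def cosel_def Pf_pair Pf_odd P_def N_def)
  qed
qed

lemma Xn:
  "distinct A \<Longrightarrow> distinct B \<Longrightarrow> length A = length B \<Longrightarrow> (\<forall>t<length A. A!t \<noteq> B!t) \<Longrightarrow>
   mk A B (\<lambda>ou a. if ou = map Not a then 1 else 0) \<in> catP"
proof (induction A arbitrary: B)
  case Nil
  then have "B = []" by simp
  have "mk [] [] (\<lambda>ou a. if ou = map Not a then 1 else 0) \<in> catP"
    by (rule catP_cong[OF catP.ident[of "[]"]]) auto
  then show ?case using \<open>B = []\<close> by simp
next
  case (Cons a A)
  then obtain b B' where B: "B = b # B'" by (cases B) auto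
  have ab: "a \<noteq> b" using Cons.prems(4) B by force
  have x1: "mk [a] [b] (\<lambda>ou a. if ou = map Not a then 1 else 0) \<in> catP"
    by (rule X1[of a "a+b+1" "a+b+2" b]) (use ab in auto)
  have ih: "mk A B' (\<lambda>ou a. if ou = map Not a then 1 else 0) \<in> catP"
  proof (rule Cons.IH)
    show "\<forall>t<length A. A ! t \<noteq> B' ! t"
    proof (intro allI impI)
      fix t assume "t < length A"
      thus "A ! t \<noteq> B' ! t" using Cons.prems(4)[rule_format, of "Suc t"] B by simp
    qed
  qed (use Cons.prems B in auto)
  have t: "mk ([a] @ A) ([b] @ B') (\<lambda>ou i.
       (if take (length [b]) ou = map Not (take (length [a]) i) then 1 else 0) *
       (if drop (length [b]) ou = map Not (drop (length [a]) i) then 1 else 0)) \<in> catP"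
    by (rule tensor_mk[OF x1 ih]) (use Cons.prems B in auto)
  show ?case unfolding B
  proof (rule catP_cong[OF t[simplified append_Cons append_Nil]])
    fix ou i :: "bool list" assume "length ou = length (b # B')" "length i = length (a # A)"
    then obtain x ou' y i' where "ou = x # ou'" "i = y # i'" by (auto simp: length_Suc_conv)
    thus "(if ou = map Not i then 1 else 0) =
       (if take (length [b]) ou = map Not (take (length [a]) i) then 1 else 0) *
       (if drop (length [b]) ou = map Not (drop (length [a]) i) then 1 else 0 :: complex)"
      by auto
  qed
qed

lemma sel_map_Not: "sel N (map Not bs) = cosel N bs" "cosel N (map Not bs) = sel N bs"
  by (induction N bs rule: list_induct2'; simp add: sel_def cosel_def)+

lemma sel_map_Suc1: "sel (map Suc N) bs = map Suc (sel N bs)"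
  by (induction N bs rule: list_induct2') (simp_all add: sel_def)

lemma cosel_map_Suc1: "cosel (map Suc N) bs = map Suc (cosel N bs)"
  by (induction N bs rule: list_induct2') (simp_all add: cosel_def)

lemmas sel_map_Suc = sel_map_Suc1 cosel_map_Suc1

lemma Pf_Suc: "Pf (\<lambda>x y. M (x - 1) (y - 1)) (map Suc L) = Pf M L"
proof -
  define n where "n = length L"
  have "(\<Sum>p | p permutes {..<n}. of_int (sign p) *
           (\<Prod>i<n div 2. M (map Suc L ! p (2*i) - 1) (map Suc L ! p (2*i+1) - 1)))
      = (\<Sum>p | p permutes {..<n}. of_int (sign p) *
           (\<Prod>i<n div 2. M (L ! p (2*i)) (L ! p (2*i+1))))"
  proof (intro sum.cong refl arg_cong2[where f = "(*)"] prod.cong)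
    fix p i assume p: "p \<in> {p. p permutes {..<n}}" and i: "i \<in> {..<n div 2}"
    have "2*i < n" "2*i+1 < n" using i by auto
    have pp: "p permutes {..<n}" using p by simp
    have "p (2*i) < n" using permutes_in_image[OF pp, of "2*i"] \<open>2*i < n\<close> by simp
    moreover have "p (2*i+1) < n" using permutes_in_image[OF pp, of "2*i+1"] \<open>2*i+1 < n\<close> by simp
    ultimately show "M (map Suc L ! p (2*i) - 1) (map Suc L ! p (2*i+1) - 1) = M (L ! p (2*i)) (L ! p (2*i+1))"
      by (simp add: n_def)
  qed
  thus ?thesis unfolding Pf_def Let_def n_def[symmetric] by (simp add: n_def)
qed

lemma sum_delta_mult:
  assumes "finite S"
  shows "(\<Sum>b\<in>S. (f b :: complex) * (if b = x then 1 else 0)) = (if x \<in> S then f x else 0)"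
        "(\<Sum>b\<in>S. (if b = x then 1 else 0) * (f b :: complex)) = (if x \<in> S then f x else 0)"
proof -
  have "(\<Sum>b\<in>S. (f b :: complex) * (if b = x then 1 else 0)) = (\<Sum>b\<in>S. if b = x then f b else 0)"
    by (rule sum.cong) auto
  thus "(\<Sum>b\<in>S. (f b :: complex) * (if b = x then 1 else 0)) = (if x \<in> S then f x else 0)"
    using sum.delta[OF assms, of x f] by simp
  have "(\<Sum>b\<in>S. (if b = x then 1 else 0) * (f b :: complex)) = (\<Sum>b\<in>S. if b = x then f b else 0)"
    by (rule sum.cong) auto
  thus "(\<Sum>b\<in>S. (if b = x then 1 else 0) * (f b :: complex)) = (if x \<in> S then f x else 0)"
    using sum.delta[OF assms, of x f] by simp
qed

lemma Xshift:
  assumes "distinct A"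
  shows "mk A (map Suc A) (\<lambda>ou a. if ou = map Not a then 1 else 0) \<in> catP"
        "mk (map Suc A) A (\<lambda>ou a. if ou = map Not a then 1 else 0) \<in> catP"
  using assms by (auto intro!: Xn simp: distinct_map)

lemma skew_Suc: "skew_on M A \<Longrightarrow> skew_on (\<lambda>x y. M (x - 1) (y - 1)) (map Suc A)"
  unfolding skew_on_def
proof (intro ballI)
  fix x y assume h: "\<forall>i\<in>set A. \<forall>j\<in>set A. M i j = - M j i" "x \<in> set (map Suc A)" "y \<in> set (map Suc A)"
  then obtain a b where "a \<in> set A" "b \<in> set A" "x = Suc a" "y = Suc b" by auto
  thus "M (x - 1) (y - 1) = - M (y - 1) (x - 1)" using h(1)[rule_format, of a b] \<open>a \<in> set A\<close> \<open>b \<in> set A\<close> by simp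
qed

lemma bra_in:
  assumes d: "distinct A" and s: "skew_on M A"
  shows "mk A [] (\<lambda>ou i. Pf M (sel A i)) \<in> catP"
proof -
  define M' where "M' = (\<lambda>x y. M (x - 1) (y - 1))"
  have D: "mk (map Suc A) [] (\<lambda>ou i. Pf M' (cosel (map Suc A) i)) \<in> catP"
    using catP.sPf_dual[OF _ skew_Suc[OF s]] d by (simp add: distinct_map M'_def)
  show ?thesis
  proof (rule catP_cong[OF comp_mk[OF Xshift(1)[OF d] D]])
    fix ou i :: "bool list" assume "length i = length A"
    hence "map Not i \<in> states (map Suc A)" by (simp add: states_def)
    thus "Pf M (sel A i) = (\<Sum>b\<in>states (map Suc A).
           Pf M' (cosel (map Suc A) b) * (if b = map Not i then 1 else 0))"
      by (simp add: sum_delta_mult sel_map_Not sel_map_Suc M'_def Pf_Suc[simplified])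
  qed
qed

lemma ket_in:
  assumes d: "distinct A" and s: "skew_on M A"
  shows "mk [] A (\<lambda>ou i. Pf M (cosel A ou)) \<in> catP"
proof -
  define M' where "M' = (\<lambda>x y. M (x - 1) (y - 1))"
  have K: "mk [] (map Suc A) (\<lambda>ou i. Pf M' (sel (map Suc A) ou)) \<in> catP"
    using catP.sPf[OF _ skew_Suc[OF s]] d by (simp add: distinct_map M'_def)
  show ?thesis
  proof (rule catP_cong[OF comp_mk[OF K Xshift(2)[OF d]]])
    fix ou i :: "bool list" assume "length ou = length A"
    hence st: "map Not ou \<in> states (map Suc A)" by (simp add: states_def)
    have e: "\<And>b. (ou = map Not b) = (b = map Not ou)" by (auto simp: comp_def)
    show "Pf M (cosel A ou) = (\<Sum>b\<in>states (map Suc A).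
           (if ou = map Not b then 1 else 0) * Pf M' (sel (map Suc A) b))"
      unfolding e using st
      by (simp add: sum_delta_mult sel_map_Not sel_map_Suc M'_def Pf_Suc[simplified])
  qed
qed

lemma skew_cnj: "skew_on M A \<Longrightarrow> skew_on (\<lambda>x y. cnj (M x y)) A"
  unfolding skew_on_def
proof (intro ballI)
  fix x y assume h: "\<forall>i\<in>set A. \<forall>j\<in>set A. M i j = - M j i" "x \<in> set A" "y \<in> set A"
  show "cnj (M x y) = - cnj (M y x)" using h(1)[rule_format, of x y] h(2,3) by simp
qed

lemma dagger_in: "f \<in> catP \<Longrightarrow> dagger f \<in> catP"
proof (induction rule: catP.induct)
  case (ident N)
  show ?case unfolding dagger_mk
    by (rule catP_cong[OF catP.ident[OF ident]]) auto
next
  case (sPf N M)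
  show ?case unfolding dagger_mk cnj_Pf
    by (rule bra_in[OF sPf(1) skew_cnj[OF sPf(2)]])
next
  case (sPf_dual N M)
  show ?case unfolding dagger_mk cnj_Pf
    by (rule ket_in[OF sPf_dual(1) skew_cnj[OF sPf_dual(2)]])
next
  case (comp A B F C G)
  have "mk C A (\<lambda>ou i. \<Sum>b\<in>states B. cnj (F b ou) * cnj (G i b)) \<in> catP"
    using catP.comp[OF comp.IH(2)[unfolded dagger_def, simplified] comp.IH(1)[unfolded dagger_def, simplified]] .
  then show ?case unfolding dagger_mk
    by (rule catP_cong) (simp add: mult.commute)
next
  case (tensor A B F A' B' G)
  have "mk (B @ B') (A @ A') (\<lambda>ou i. cnj (F (take (length B) i) (take (length A) ou)) *
          cnj (G (drop (length B) i) (drop (length A) ou))) \<in> catP"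
    using catP.tensor[OF tensor.IH(1)[unfolded dagger_def, simplified] tensor.IH(2)[unfolded dagger_def, simplified] tensor.hyps(4,3)] .
  then show ?case unfolding dagger_mk
    by (rule catP_cong) simp
qed

theorem mainTheorem4:
  shows "(\<forall>M A. distinct A \<longrightarrow> skew_on M A \<longrightarrow>
            mk A [] (\<lambda>ou i. Pf M (sel A i)) \<in> catP \<and>
            mk [] A (\<lambda>ou i. Pf M (cosel A ou)) \<in> catP)
         \<and> (\<forall>f\<in>catP. dagger f \<in> catP)"
  using bra_in ket_in dagger_in by blast

end
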